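(* In the Setting, it is impossible that $r=\sqrt{K^2-\lambda_2V}$ and $s=-\sqrt{K^2-\lambda_2V}$.
   Context: Setting: $\Gamma$ is a primitive strongly regular graph with parameters $(v,k,\lambda,\mu)$ (a $k$-regular graph on $v$ vertices, any two adjacent vertices having $\lambda$ and any two distinct non-adjacent vertices having $\mu$ common neighbours; primitive means $\Gamma$ and its complement are connected), with spectrum $k^1, r^f, s^g$ where $k>r>s$ and exponents are multiplicities. $C$ is a coclique in $\Gamma$ of size $c=\frac{vs}{s-k}$. A $K$-regular graph on $V$ vertices, neither complete nor edgeless, is a divisible design graph with parameters $(V,K,\lambda_1,\lambda_2;m,n)$ if its vertex set can be partitioned into $m$ canonical classes of size $n$ such that two distinct vertices in the same class have exactly $\lambda_1$ common neighbours and two vertices in different classes have exactly $\lambda_2$ common neighbours; it is proper unless $m=1$, $n=1$ or $\lambda_1=\lambda_2$. It is assumed that the subgraph $\Delta$ induced on $V(\Gamma)\setminus C$ is a proper divisible design graph with parameters $(V,K,\lambda_1,\lambda_2;m,n)$. It is known that the eigenvalues of $\Delta$ other than $K$ lie in $\{\pm\sqrt{K-\lambda_1},\pm\sqrt{K^2-\lambda_2V}\}$, and that the spectrum of $\Delta$ is $(k+s)^1, r^{f-c+1}, (r+s)^{c-1}, s^{g-c}$, with $c<g$. *)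

theory Defs
  imports "Jordan_Normal_Form.Char_Poly" "HOL-Library.Disjoint_Sets"
begin

definition simple_graph :: "'a set \<Rightarrow> ('a \<Rightarrow> 'a \<Rightarrow> bool) \<Rightarrow> bool" where
  "simple_graph V E \<longleftrightarrow> finite V \<and> (\<forall>x y. E x y \<longrightarrow> x \<in> V \<and> y \<in> V)
     \<and> (\<forall>x y. E x y \<longrightarrow> E y x) \<and> (\<forall>x. \<not> E x x)"

definition induced :: "('a \<Rightarrow> 'a \<Rightarrow> bool) \<Rightarrow> 'a set \<Rightarrow> 'a \<Rightarrow> 'a \<Rightarrow> bool" where
  "induced E W = (\<lambda>x y. E x y \<and> x \<in> W \<and> y \<in> W)"

definition complement_graph :: "'a set \<Rightarrow> ('a \<Rightarrow> 'a \<Rightarrow> bool) \<Rightarrow> 'a \<Rightarrow> 'a \<Rightarrow> bool" where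
  "complement_graph V E = (\<lambda>x y. x \<in> V \<and> y \<in> V \<and> x \<noteq> y \<and> \<not> E x y)"

definition graph_connected :: "'a set \<Rightarrow> ('a \<Rightarrow> 'a \<Rightarrow> bool) \<Rightarrow> bool" where
  "graph_connected V E \<longleftrightarrow> (\<forall>x\<in>V. \<forall>y\<in>V. (induced E V)\<^sup>*\<^sup>* x y)"

definition degree :: "'a set \<Rightarrow> ('a \<Rightarrow> 'a \<Rightarrow> bool) \<Rightarrow> 'a \<Rightarrow> nat" where
  "degree V E x = card {y \<in> V. E x y}"

definition common_nbrs :: "'a set \<Rightarrow> ('a \<Rightarrow> 'a \<Rightarrow> bool) \<Rightarrow> 'a \<Rightarrow> 'a \<Rightarrow> nat" where
  "common_nbrs V E x y = card {z \<in> V. E x z \<and> E y z}"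

definition strongly_regular ::
  "'a set \<Rightarrow> ('a \<Rightarrow> 'a \<Rightarrow> bool) \<Rightarrow> nat \<Rightarrow> nat \<Rightarrow> nat \<Rightarrow> nat \<Rightarrow> bool" where
  "strongly_regular V E v k lam mu \<longleftrightarrow> simple_graph V E \<and> card V = v
     \<and> (\<forall>x\<in>V. degree V E x = k)
     \<and> (\<forall>x\<in>V. \<forall>y\<in>V. E x y \<longrightarrow> common_nbrs V E x y = lam)
     \<and> (\<forall>x\<in>V. \<forall>y\<in>V. x \<noteq> y \<and> \<not> E x y \<longrightarrow> common_nbrs V E x y = mu)"

definition primitive_graph :: "'a set \<Rightarrow> ('a \<Rightarrow> 'a \<Rightarrow> bool) \<Rightarrow> bool" where
  "primitive_graph V E \<longleftrightarrow> graph_connected V E \<and> graph_connected V (complement_graph V E)"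

definition coclique :: "'a set \<Rightarrow> ('a \<Rightarrow> 'a \<Rightarrow> bool) \<Rightarrow> 'a set \<Rightarrow> bool" where
  "coclique V E C \<longleftrightarrow> C \<subseteq> V \<and> (\<forall>x\<in>C. \<forall>y\<in>C. \<not> E x y)"

text \<open>Adjacency matrix w.r.t. the sorted enumeration of the vertex set (the spectrum
  does not depend on the enumeration).\<close>
definition adj_matrix :: "'a::linorder set \<Rightarrow> ('a \<Rightarrow> 'a \<Rightarrow> bool) \<Rightarrow> real mat" where
  "adj_matrix V E = (let xs = sorted_list_of_set V in
     mat (length xs) (length xs) (\<lambda>(i,j). if E (xs ! i) (xs ! j) then 1 else 0))"

definition spectrum_graph :: "'a::linorder set \<Rightarrow> ('a \<Rightarrow> 'a \<Rightarrow> bool) \<Rightarrow> real multiset" where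
  "spectrum_graph V E = proots (char_poly (adj_matrix V E))"

definition divisible_design_graph ::
  "'a set \<Rightarrow> ('a \<Rightarrow> 'a \<Rightarrow> bool) \<Rightarrow> nat \<Rightarrow> nat \<Rightarrow> nat \<Rightarrow> nat \<Rightarrow> nat \<Rightarrow> nat \<Rightarrow> bool" where
  "divisible_design_graph W E Vn K l1 l2 m n \<longleftrightarrow> simple_graph W E \<and> card W = Vn
     \<and> (\<forall>x\<in>W. degree W E x = K)
     \<and> (\<exists>x\<in>W. \<exists>y\<in>W. x \<noteq> y \<and> \<not> E x y)
     \<and> (\<exists>x\<in>W. \<exists>y\<in>W. E x y)
     \<and> (\<exists>P. partition_on W P \<and> card P = m \<and> (\<forall>B\<in>P. card B = n)
          \<and> (\<forall>B\<in>P. \<forall>x\<in>B. \<forall>y\<in>B. x \<noteq> y \<longrightarrow> common_nbrs W E x y = l1)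
          \<and> (\<forall>B\<in>P. \<forall>B'\<in>P. B \<noteq> B' \<longrightarrow> (\<forall>x\<in>B. \<forall>y\<in>B'. common_nbrs W E x y = l2)))"

definition proper_ddg ::
  "'a set \<Rightarrow> ('a \<Rightarrow> 'a \<Rightarrow> bool) \<Rightarrow> nat \<Rightarrow> nat \<Rightarrow> nat \<Rightarrow> nat \<Rightarrow> nat \<Rightarrow> nat \<Rightarrow> bool" where
  "proper_ddg W E Vn K l1 l2 m n \<longleftrightarrow> divisible_design_graph W E Vn K l1 l2 m n
     \<and> m \<noteq> 1 \<and> n \<noteq> 1 \<and> l1 \<noteq> l2"

end

theory Submission
  imports Defs
begin


lemma eig_obtain:
  fixes A :: "real mat"
  assumes A: "A \<in> carrier_mat n n" and th: "\<theta> \<in># proots (char_poly A)"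
  obtains u :: "nat \<Rightarrow> real" where "\<And>i. i<n \<Longrightarrow> (\<Sum>j<n. A$$(i,j) * u j) = \<theta> * u i" "\<exists>i<n. u i \<noteq> 0"
proof -
  have nz: "char_poly A \<noteq> 0" using degree_monic_char_poly[OF A] by auto
  have "poly (char_poly A) \<theta> = 0" using th nz by simp
  then have "eigenvalue A \<theta>" using eigenvalue_root_char_poly[OF A] by simp
  then obtain v where ev: "eigenvector A v \<theta>" unfolding eigenvalue_def by auto
  have dr: "dim_row A = n" "dim_col A = n" using A by auto
  have v: "v \<in> carrier_vec n" "v \<noteq> 0\<^sub>v n" "A *\<^sub>v v = \<theta> \<cdot>\<^sub>v v" using ev dr unfolding eigenvector_def by auto
  show ?thesis
  proof (rule that[of "\<lambda>j. v $ j"])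
    fix i assume i: "i < n"
    have "(A *\<^sub>v v) $ i = \<theta> * v $ i" using v(3) i v(1) by simp
    moreover have "(A *\<^sub>v v) $ i = (\<Sum>j<n. A$$(i,j) * v $ j)"
      using i v(1) dr unfolding index_mult_mat_vec[OF i[folded dr(1)]] scalar_prod_def
      by (auto intro!: sum.cong simp: lessThan_atLeast0)
    ultimately show "(\<Sum>j<n. A$$(i,j) * v $ j) = \<theta> * v $ i" by simp
  next
    show "\<exists>i<n. v $ i \<noteq> 0"
    proof (rule ccontr)
      assume "\<not> ?thesis"
      then have "v = 0\<^sub>v n" using v(1) by (intro eq_vecI) auto
      with v(2) show False by simp
    qed
  qed
qed

lemma not_eig:
  fixes A :: "real mat"
  assumes A: "A \<in> carrier_mat n n" and th: "\<theta> \<notin># proots (char_poly A)"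
    and w: "\<And>i. i<n \<Longrightarrow> (\<Sum>j<n. A$$(i,j) * w j) = \<theta> * w i" and i: "i < n"
  shows "w i = 0"
proof (rule ccontr)
  assume wi: "w i \<noteq> 0"
  have nz: "char_poly A \<noteq> 0" using degree_monic_char_poly[OF A] by auto
  have dr: "dim_row A = n" "dim_col A = n" using A by auto
  define v where "v = vec n w"
  have "eigenvector A v \<theta>"
    unfolding eigenvector_def
  proof (intro conjI)
    show "v \<in> carrier_vec (dim_row A)" using dr v_def by simp
    show "v \<noteq> 0\<^sub>v (dim_row A)"
    proof
      assume "v = 0\<^sub>v (dim_row A)"
      then have "v $ i = 0" using i dr by simp
      with wi i show False by (simp add: v_def)
    qed
    show "A *\<^sub>v v = \<theta> \<cdot>\<^sub>v v"
    proof (rule eq_vecI)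
      fix j assume "j < dim_vec (\<theta> \<cdot>\<^sub>v v)"
      then have j: "j < n" by (simp add: v_def)
      have "(A *\<^sub>v v) $ j = (\<Sum>l<n. A$$(j,l) * w l)"
        using j dr unfolding index_mult_mat_vec[OF j[folded dr(1)]] scalar_prod_def
        by (auto intro!: sum.cong simp: lessThan_atLeast0 v_def)
      then show "(A *\<^sub>v v) $ j = (\<theta> \<cdot>\<^sub>v v) $ j" using w[OF j] j by (simp add: v_def)
    qed (simp add: v_def dr)
  qed
  then have "eigenvalue A \<theta>" unfolding eigenvalue_def by auto
  then have "poly (char_poly A) \<theta> = 0" using eigenvalue_root_char_poly[OF A] by simp
  with th nz show False by simp
qed


lemma card_filter_sum: "finite A \<Longrightarrow> real (card {x\<in>A. P x}) = (\<Sum>x\<in>A. if P x then 1 else 0)"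
proof -
  assume f: "finite A"
  have "{x\<in>A. P x} = A \<inter> Collect P" by auto
  then show ?thesis using f by (simp add: sum.If_cases)
qed

lemma reindex_sorted:
  assumes "finite V"
  shows "(\<Sum>j<card V. f (sorted_list_of_set V ! j)) = (\<Sum>y\<in>V. f y)"
proof -
  let ?xs = "sorted_list_of_set V"
  have d: "distinct ?xs" and s: "set ?xs = V" and l: "length ?xs = card V" using assms by auto
  have inj: "inj_on (nth ?xs) {..<length ?xs}" using d by (simp add: inj_on_nth)
  have im0: "nth ?xs ` {..<length ?xs} = set ?xs" by (auto simp: in_set_conv_nth)
  have im: "nth ?xs ` {..<length ?xs} = V" using im0 s by simp
  show ?thesis using sum.reindex[OF inj, of f] im l by simp
qed

lemma srg_facts:
  assumes srg: "strongly_regular V E v k lam mu"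
  shows "\<And>x. x \<in> V \<Longrightarrow> (\<Sum>y\<in>V. if E x y then 1 else 0::real) = real k"
    and "\<And>x y. x \<in> V \<Longrightarrow> y \<in> V \<Longrightarrow>
         (\<Sum>z\<in>V. (if E x z then 1 else 0::real) * (if E z y then 1 else 0))
          = (if x = y then real k else if E x y then real lam else real mu)"
proof -
  have sg: "simple_graph V E" and deg: "\<forall>x\<in>V. degree V E x = k"
    and la: "\<forall>x\<in>V. \<forall>y\<in>V. E x y \<longrightarrow> common_nbrs V E x y = lam"
    and mu: "\<forall>x\<in>V. \<forall>y\<in>V. x \<noteq> y \<and> \<not> E x y \<longrightarrow> common_nbrs V E x y = mu"
    using srg unfolding strongly_regular_def by auto
  have fin: "finite V" and sym: "\<And>x y. E x y \<Longrightarrow> E y x" and irr: "\<And>x. \<not> E x x"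
    using sg unfolding simple_graph_def by auto
  show "\<And>x. x \<in> V \<Longrightarrow> (\<Sum>y\<in>V. if E x y then 1 else 0::real) = real k"
    using deg fin unfolding degree_def by (simp add: card_filter_sum[symmetric])
  fix x y assume x: "x \<in> V" and y: "y \<in> V"
  have "(\<Sum>z\<in>V. (if E x z then 1 else 0::real) * (if E z y then 1 else 0))
     = (\<Sum>z\<in>V. if E x z \<and> E y z then 1 else 0)"
    by (rule sum.cong) (auto dest: sym)
  also have "\<dots> = real (card {z\<in>V. E x z \<and> E y z})" using fin by (simp add: card_filter_sum)
  also have "\<dots> = (if x = y then real k else if E x y then real lam else real mu)"
  proof -
    have "x = y \<Longrightarrow> card {z\<in>V. E x z \<and> E y z} = k" using deg x unfolding degree_def by simp
    moreover have "x \<noteq> y \<Longrightarrow> E x y \<Longrightarrow> card {z\<in>V. E x z \<and> E y z} = lam"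
      using la x y unfolding common_nbrs_def by auto
    moreover have "x \<noteq> y \<Longrightarrow> \<not> E x y \<Longrightarrow> card {z\<in>V. E x z \<and> E y z} = mu"
      using mu x y unfolding common_nbrs_def by auto
    ultimately show ?thesis using irr by auto
  qed
  finally show "(\<Sum>z\<in>V. (if E x z then 1 else 0::real) * (if E z y then 1 else 0))
          = (if x = y then real k else if E x y then real lam else real mu)" .
qed


lemma sum4: "(\<Sum>j\<in>A. X j - Y j - (s::real)*(P j - Q j)) = sum X A - sum Y A - s*(sum P A - sum Q A)"
  by (simp add: sum_subtractf sum_distrib_left right_diff_distrib)

lemma quad_eig:
  fixes a :: "nat \<Rightarrow> nat \<Rightarrow> real" and u :: "nat \<Rightarrow> real"
  assumes sym: "\<And>i j. i<n \<Longrightarrow> j<n \<Longrightarrow> a i j = a j i"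
    and rows: "\<And>i. i<n \<Longrightarrow> (\<Sum>j<n. a i j) = k"
    and sq: "\<And>i j. i<n \<Longrightarrow> j<n \<Longrightarrow> (\<Sum>l<n. a i l * a l j) = mu - (mu - la) * a i j - (mu - k) * (if i = j then 1 else 0)"
    and eig: "\<And>i. i<n \<Longrightarrow> (\<Sum>j<n. a i j * u j) = th * u i"
    and thk: "th \<noteq> k" and i0: "i0 < n" "u i0 \<noteq> 0"
  shows "th^2 + (mu - la) * th + (mu - k) = 0"
proof -
  have "(\<Sum>i<n. \<Sum>j<n. a i j * u j) = (\<Sum>j<n. \<Sum>i<n. a i j * u j)" by (rule sum.swap)
  also have "\<dots> = (\<Sum>j<n. (\<Sum>i<n. a j i) * u j)"
    by (rule sum.cong) (auto simp: sum_distrib_right sym)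
  also have "\<dots> = (\<Sum>j<n. k * u j)" using rows by simp
  finally have "(\<Sum>i<n. th * u i) = k * (\<Sum>j<n. u j)" using eig by (simp add: sum_distrib_left)
  moreover have "(th - k) * (\<Sum>j<n. u j) = (\<Sum>i<n. th * u i) - k * (\<Sum>j<n. u j)"
    using left_diff_distrib[of th k "(\<Sum>j<n. u j)"] sum_distrib_left[of th u "{..<n}"] by linarith
  ultimately have "(th - k) * (\<Sum>j<n. u j) = 0" by simp
  then have su: "(\<Sum>j<n. u j) = 0" using thk by simp
  have "(\<Sum>j<n. (\<Sum>l<n. a i0 l * a l j) * u j) = (\<Sum>l<n. a i0 l * (\<Sum>j<n. a l j * u j))"
  proof -
    have "(\<Sum>j<n. (\<Sum>l<n. a i0 l * a l j) * u j) = (\<Sum>j<n. \<Sum>l<n. a i0 l * (a l j * u j))"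
      by (simp add: sum_distrib_right mult.assoc)
    also have "\<dots> = (\<Sum>l<n. \<Sum>j<n. a i0 l * (a l j * u j))" by (rule sum.swap)
    also have "\<dots> = (\<Sum>l<n. a i0 l * (\<Sum>j<n. a l j * u j))" by (simp add: sum_distrib_left)
    finally show ?thesis .
  qed
  also have "\<dots> = (\<Sum>l<n. a i0 l * (th * u l))" using eig by simp
  also have "\<dots> = th * (\<Sum>l<n. a i0 l * u l)" by (simp add: sum_distrib_left mult.left_commute)
  also have "\<dots> = th * th * u i0" using eig[OF i0(1)] by simp
  finally have e1: "(\<Sum>j<n. (\<Sum>l<n. a i0 l * a l j) * u j) = th * th * u i0" .
  have "(\<Sum>j<n. (\<Sum>l<n. a i0 l * a l j) * u j) =
     (\<Sum>j<n. mu * u j - (mu - la) * (a i0 j * u j) - (mu - k) * (if i0 = j then u j else 0))"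
  proof (intro sum.cong refl)
    fix j assume "j \<in> {..<n}" then have j: "j < n" by simp
    show "(\<Sum>l<n. a i0 l * a l j) * u j = mu * u j - (mu - la) * (a i0 j * u j) - (mu - k) * (if i0 = j then u j else 0)"
      unfolding sq[OF i0(1) j] by (simp add: algebra_simps)
  qed
  also have "\<dots> = mu * (\<Sum>j<n. u j) - (mu - la) * (\<Sum>j<n. a i0 j * u j) - (mu - k) * u i0"
  proof -
    have dd: "(\<Sum>j<n. (if i0 = j then u j else 0)) = u i0" using i0 by simp
    have "(\<Sum>j<n. mu * u j - (mu - la) * (a i0 j * u j) - (mu - k) * (if i0 = j then u j else 0))
      = (\<Sum>j<n. mu * u j) - (\<Sum>j<n. (mu - la) * (a i0 j * u j)) - (\<Sum>j<n. (mu - k) * (if i0 = j then u j else 0))"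
      by (simp only: sum_subtractf)
    also have "\<dots> = mu * (\<Sum>j<n. u j) - (mu - la) * (\<Sum>j<n. a i0 j * u j) - (mu - k) * (\<Sum>j<n. (if i0 = j then u j else 0))"
      by (simp only: sum_distrib_left)
    finally show ?thesis unfolding dd .
  qed
  also have "\<dots> = - (mu - la) * th * u i0 - (mu - k) * u i0" using su eig[OF i0(1)] by (simp add: algebra_simps)
  finally have "th * th * u i0 = - (mu - la) * th * u i0 - (mu - k) * u i0" using e1 by simp
  then have "(th^2 + (mu - la) * th + (mu - k)) * u i0 = 0" by (simp add: algebra_simps power2_eq_square)
  then show ?thesis using i0 by simp
qed

lemma w_eig:
  fixes a :: "nat \<Rightarrow> nat \<Rightarrow> real"
  assumes sq: "\<And>i j. i<n \<Longrightarrow> j<n \<Longrightarrow> (\<Sum>l<n. a i l * a l j) = mu - (mu - la) * a i j - (mu - k) * (if i = j then 1 else 0)"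
    and sr: "s + \<rho> = la - mu" "s * \<rho> = mu - k" and i0: "i0 < n" and j0: "j0 < n" and i: "i < n"
  shows "(\<Sum>j<n. a i j * (a j i0 - a j j0 - s * ((if j = i0 then 1 else 0) - (if j = j0 then 1 else 0))))
     = \<rho> * (a i i0 - a i j0 - s * ((if i = i0 then 1 else 0) - (if i = j0 then 1 else 0)))"
proof -
  have "(\<Sum>j<n. a i j * (a j i0 - a j j0 - s * ((if j = i0 then 1 else 0) - (if j = j0 then 1 else 0))))
     = (\<Sum>j<n. a i j * a j i0) - (\<Sum>j<n. a i j * a j j0) - s * (a i i0 - a i j0)"
  proof -
    have d: "\<And>x. x < n \<Longrightarrow> (\<Sum>j<n. a i j * (if j = x then 1 else 0)) = a i x"
      by (simp add: if_distrib cong: if_cong)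
    have "(\<Sum>j<n. a i j * (a j i0 - a j j0 - s * ((if j = i0 then 1 else 0) - (if j = j0 then 1 else 0))))
      = (\<Sum>j<n. a i j * a j i0) - (\<Sum>j<n. a i j * a j j0) - s * ((\<Sum>j<n. a i j * (if j = i0 then 1 else 0)) - (\<Sum>j<n. a i j * (if j = j0 then 1 else 0)))"
    proof -
      have "\<And>j. a i j * (a j i0 - a j j0 - s * ((if j = i0 then 1 else 0) - (if j = j0 then 1 else 0)))
         = a i j * a j i0 - a i j * a j j0 - s * ((a i j * (if j = i0 then 1 else 0)) - a i j * (if j = j0 then 1 else 0))"
        by (simp add: algebra_simps)
      then have "(\<Sum>j<n. a i j * (a j i0 - a j j0 - s * ((if j = i0 then 1 else 0) - (if j = j0 then 1 else 0))))
        = (\<Sum>j<n. a i j * a j i0 - a i j * a j j0 - s * ((a i j * (if j = i0 then 1 else 0)) - a i j * (if j = j0 then 1 else 0)))"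
        by (intro sum.cong) auto
      then show ?thesis unfolding sum4 .
    qed
    then show ?thesis using d[OF i0] d[OF j0] by simp
  qed
  also have "\<dots> = \<rho> * (a i i0 - a i j0 - s * ((if i = i0 then 1 else 0) - (if i = j0 then 1 else 0)))"
    unfolding sq[OF i i0] sq[OF i j0]
  proof -
    have m1: "mu - la = - (s + \<rho>)" and m2: "mu - k = s * \<rho>" using sr by auto
    show "mu - (mu - la) * a i i0 - (mu - k) * (if i = i0 then 1 else 0) -
    (mu - (mu - la) * a i j0 - (mu - k) * (if i = j0 then 1 else 0)) - s * (a i i0 - a i j0) =
    \<rho> * (a i i0 - a i j0 - s * ((if i = i0 then 1 else 0) - (if i = j0 then 1 else 0)))"
      unfolding m1 m2 by (simp add: algebra_simps)
  qed
  finally show ?thesis .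
qed


theorem mainTheorem7:
  fixes V :: "'a::linorder set" and E :: "'a \<Rightarrow> 'a \<Rightarrow> bool" and C :: "'a set"
    and v k lam mu f g :: nat and r s :: real
    and Vn K l1 l2 m n :: nat
  assumes srg: "strongly_regular V E v k lam mu"
    and prim: "primitive_graph V E"
    and spec: "spectrum_graph V E = {#real k#} + replicate_mset f r + replicate_mset g s"
    and order: "real k > r" "r > s"
    and cocl: "coclique V E C"
    and csize: "real (card C) = real v * s / (s - real k)"
    and ddg: "proper_ddg (V - C) (induced E (V - C)) Vn K l1 l2 m n"
    and eig: "\<forall>\<theta>. \<theta> \<in># spectrum_graph (V - C) (induced E (V - C)) \<and> \<theta> \<noteq> real K \<longrightarrow>
               \<theta> \<in> {sqrt (real K - real l1), - sqrt (real K - real l1),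
                     sqrt (real K ^ 2 - real l2 * real Vn), - sqrt (real K ^ 2 - real l2 * real Vn)}"
    and specD: "spectrum_graph (V - C) (induced E (V - C)) =
        {#real k + s#} + replicate_mset (f + 1 - card C) r
        + replicate_mset (card C - 1) (r + s) + replicate_mset (g - card C) s"
    and cg: "card C < g"
  shows "\<not> (r = sqrt (real K ^ 2 - real l2 * real Vn) \<and> s = - sqrt (real K ^ 2 - real l2 * real Vn))"
proof
  define t where "t = sqrt (real K ^ 2 - real l2 * real Vn)"
  assume rs: "r = sqrt (real K ^ 2 - real l2 * real Vn) \<and> s = - sqrt (real K ^ 2 - real l2 * real Vn)"
  then have rt: "r = t" and st: "s = - t" unfolding t_def by auto
  have tpos: "t > 0" using order rt st by simp
  define W where "W = V - C"
  have sg: "simple_graph V E" and cardV: "card V = v" and deg: "\<forall>x\<in>V. degree V E x = k"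
    and laf: "\<forall>x\<in>V. \<forall>y\<in>V. E x y \<longrightarrow> common_nbrs V E x y = lam"
    and muf: "\<forall>x\<in>V. \<forall>y\<in>V. x \<noteq> y \<and> \<not> E x y \<longrightarrow> common_nbrs V E x y = mu"
    using srg unfolding strongly_regular_def by auto
  have fin: "finite V" and sym: "\<And>x y. E x y \<Longrightarrow> E y x" and irr: "\<And>x. \<not> E x x"
    and inV: "\<And>x y. E x y \<Longrightarrow> x \<in> V \<and> y \<in> V"
    using sg unfolding simple_graph_def by auto
  have CV: "C \<subseteq> V" and Cco: "\<And>x y. x \<in> C \<Longrightarrow> y \<in> C \<Longrightarrow> \<not> E x y" using cocl unfolding coclique_def by auto
  have finC: "finite C" using fin CV finite_subset by auto
  have finW: "finite W" using fin W_def by auto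
  have ddg': "divisible_design_graph W (induced E W) Vn K l1 l2 m n" and n1: "n \<noteq> 1"
    using ddg unfolding proper_ddg_def W_def by auto
  have cardW: "card W = Vn" and degW: "\<And>x. x \<in> W \<Longrightarrow> card {y\<in>W. E x y} = K"
    and nonadj: "\<exists>x\<in>W. \<exists>y\<in>W. x \<noteq> y \<and> \<not> E x y"
    and hasedge: "\<exists>x\<in>W. \<exists>y\<in>W. E x y"
    using ddg' unfolding divisible_design_graph_def degree_def common_nbrs_def induced_def
    by (auto cong: conj_cong)
  obtain P where Ppart: "partition_on W P" and Pn: "\<forall>B\<in>P. card B = n"
     and Pl1: "\<forall>B\<in>P. \<forall>x\<in>B. \<forall>y\<in>B. x \<noteq> y \<longrightarrow> common_nbrs W (induced E W) x y = l1"
    using ddg' unfolding divisible_design_graph_def by auto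

  define z :: int where "z = int K ^ 2 - int l2 * int Vn"
  have Xz: "real K ^ 2 - real l2 * real Vn = real_of_int z" unfolding z_def by simp
  have "real_of_int z > 0" using tpos unfolding t_def Xz by simp
  then have "z \<ge> 1" by simp
  then have t2: "t ^ 2 \<ge> 1" unfolding t_def Xz using \<open>real_of_int z > 0\<close> by simp
  have t1: "t \<ge> 1"
  proof (rule ccontr)
    assume "\<not> t \<ge> 1" then have "t < 1" by simp
    then have "t * t < 1 * 1" using tpos by (intro mult_strict_mono) auto
    with t2 show False by (simp add: power2_eq_square)
  qed
  have cardVW: "card V = card W + card C"
  proof -
    have "V = W \<union> C" using CV W_def by auto
    moreover have "W \<inter> C = {}" using W_def by auto
    ultimately show ?thesis using card_Un_disjoint[OF finW finC] by simp
  qed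
  have Nsplit: "real k = real K + real (card {y\<in>C. E x y})" if x: "x \<in> W" for x
  proof -
    have "{y\<in>V. E x y} = {y\<in>W. E x y} \<union> {y\<in>C. E x y}" using CV W_def by auto
    moreover have "{y\<in>W. E x y} \<inter> {y\<in>C. E x y} = {}" using W_def by auto
    ultimately have "card {y\<in>V. E x y} = card {y\<in>W. E x y} + card {y\<in>C. E x y}"
      using finW finC by (simp add: card_Un_disjoint)
    moreover have "card {y\<in>V. E x y} = k" using deg x W_def unfolding degree_def by auto
    ultimately show ?thesis using degW[OF x] by simp
  qed
  have Cdeg: "card {x\<in>W. E u x} = k" if u: "u \<in> C" for u
  proof -
    have "{x\<in>W. E u x} = {x\<in>V. E u x}" using u Cco inV W_def by auto
    then show ?thesis using deg u CV unfolding degree_def by auto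
  qed
  have "(\<Sum>u\<in>C. real (card {x\<in>W. E u x})) = (\<Sum>u\<in>C. \<Sum>x\<in>W. if E u x then 1 else 0)"
    using finW by (simp add: card_filter_sum)
  also have "\<dots> = (\<Sum>x\<in>W. \<Sum>u\<in>C. if E u x then 1 else 0)" by (rule sum.swap)
  also have "\<dots> = (\<Sum>x\<in>W. real (card {u\<in>C. E x u}))"
    using finC by (auto simp: card_filter_sum intro!: sum.cong dest: sym)
  also have "\<dots> = (\<Sum>x\<in>W. real k - real K)" using Nsplit by (intro sum.cong) auto
  finally have dc: "real (card C) * real k = real (card W) * (real k - real K)"
    using Cdeg by simp
  have sk: "s - real k \<noteq> 0" using order by simp
  have cs: "real (card C) * (s - real k) = real v * s" using csize sk by (simp add: field_simps)
  have ck: "real (card C) * real k = real (card W) * t"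
    using cs cardVW cardV st by (simp add: algebra_simps)
  have Wne: "W \<noteq> {}" using hasedge by auto
  have Wpos: "real (card W) > 0" using Wne finW by (simp add: card_gt_0_iff)
  have "(t + real K - real k) * real (card W) = 0" using dc ck by (simp add: algebra_simps)
  then have Kt: "real K = real k - t" using Wpos by simp
  obtain x1 z1 where x1: "x1 \<in> W" and z1: "z1 \<in> W" and xz1: "x1 \<noteq> z1" "\<not> E x1 z1" using nonadj by auto
  have c2: "card C \<ge> 2"
  proof (rule ccontr)
    assume "\<not> card C \<ge> 2"
    then have "card C = 0 \<or> card C = 1" by auto
    then show False
    proof
      assume "card C = 0"
      then have "real v * s = 0" using cs by simp
      then have "v = 0" using order st tpos by simp
      then show False using cardV fin x1 W_def by auto
    next
      assume c1: "card C = 1"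
      have "{y\<in>V. E x1 y} \<subseteq> V - {x1, z1}" using irr xz1 inV by auto
      then have "card {y\<in>V. E x1 y} \<le> card (V - {x1, z1})" using fin by (intro card_mono) auto
      moreover have "card (V - {x1, z1}) = card V - 2" using x1 z1 xz1 W_def fin by (simp add: card_Diff_subset)
      moreover have "card {y\<in>V. E x1 y} = k" using deg x1 W_def unfolding degree_def by auto
      moreover have "card {x1, z1} \<le> card V" using fin x1 z1 W_def by (intro card_mono) auto
      ultimately have kle: "k + 2 \<le> v" using cardV xz1 by simp
      have "real k = real (card W) * t" using ck c1 by simp
      moreover have "card W = v - 1" using cardVW cardV c1 by simp
      moreover have "real (card W) * 1 \<le> real (card W) * t" using t1 by (intro mult_left_mono) auto
      ultimately have "real k \<ge> real (v - 1)" by simp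
      with kle show False by linarith
    qed
  qed

  have K1: "K \<ge> 1"
  proof -
    obtain xe ye where xe: "xe \<in> W" "ye \<in> W" "E xe ye" using hasedge by auto
    have "ye \<in> {y\<in>W. E xe y}" using xe by auto
    then have "card {y\<in>W. E xe y} > 0" using finW by (auto simp: card_gt_0_iff)
    then show ?thesis using degW[OF xe(1)] by simp
  qed
  have "0 \<in># replicate_mset (card C - 1) (r + s)" using c2 rt st by simp
  then have "0 \<in># spectrum_graph (V - C) (induced E (V - C))" unfolding specD by simp
  moreover have "(0::real) \<noteq> real K" using K1 by simp
  ultimately have "(0::real) \<in> {sqrt (real K - real l1), - sqrt (real K - real l1), t, - t}"
    using eig unfolding t_def by blast
  then have "sqrt (real K - real l1) = 0" using tpos by auto
  then have Kl1: "real K \<le> real l1" by simp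
  obtain B where B: "B \<in> P" "x1 \<in> B" using Ppart x1 unfolding partition_on_def by auto
  have BW: "B \<subseteq> W" using Ppart B unfolding partition_on_def by auto
  have Bne: "B \<noteq> {}" using Ppart B unfolding partition_on_def by auto
  have finB: "finite B" using BW finW finite_subset by auto
  have "card B \<ge> 2" using Pn B n1 Bne finB by (metis One_nat_def card_0_eq less_2_cases not_less)
  then have "card (B - {x1}) \<ge> 1" using B by simp
  then have "B - {x1} \<noteq> {}" by (metis card.empty not_one_le_zero)
  then obtain y1 where y1: "y1 \<in> B" "y1 \<noteq> x1" by blast
  have xB: "x1 \<in> W" "y1 \<in> W" using BW B y1 by auto
  have l1c: "card {z\<in>W. E x1 z \<and> E y1 z} = l1"
  proof -
    from Pl1 B(1) have "\<forall>x\<in>B. \<forall>y\<in>B. x \<noteq> y \<longrightarrow> common_nbrs W (induced E W) x y = l1" by (rule bspec)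
    then have "common_nbrs W (induced E W) x1 y1 = l1" using B(2) y1 by auto
    moreover have "{z\<in>W. induced E W x1 z \<and> induced E W y1 z} = {z\<in>W. E x1 z \<and> E y1 z}"
      using xB unfolding induced_def by auto
    ultimately show ?thesis unfolding common_nbrs_def by simp
  qed
  have sub1: "{z\<in>W. E x1 z \<and> E y1 z} \<subseteq> {z\<in>W. E x1 z}" by auto
  have eqN: "{z\<in>W. E x1 z \<and> E y1 z} = {z\<in>W. E x1 z}"
  proof (rule card_subset_eq[OF _ sub1])
    show "finite {z\<in>W. E x1 z}" using finW by simp
    have "card {z\<in>W. E x1 z \<and> E y1 z} \<le> card {z\<in>W. E x1 z}" using finW sub1 by (intro card_mono) auto
    moreover have "K \<le> l1" using Kl1 by simp
    ultimately show "card {z\<in>W. E x1 z \<and> E y1 z} = card {z\<in>W. E x1 z}" using l1c degW[OF xB(1)] by simp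
  qed
  have nxy: "\<not> E x1 y1"
  proof
    assume "E x1 y1"
    then have "y1 \<in> {z\<in>W. E x1 z}" using xB by auto
    then show False using eqN irr by auto
  qed
  have xyV: "x1 \<in> V" "y1 \<in> V" using xB W_def by auto
  have muc: "card {z\<in>V. E x1 z \<and> E y1 z} = mu"
    using muf xyV y1 nxy unfolding common_nbrs_def by auto
  have "card {z\<in>W. E x1 z \<and> E y1 z} \<le> card {z\<in>V. E x1 z \<and> E y1 z}"
    using fin W_def by (intro card_mono) auto
  then have muK: "real mu \<ge> real K" using muc l1c Kl1 by simp
  have "card {z\<in>V. E x1 z \<and> E y1 z} \<le> card {z\<in>V. E x1 z}" using fin by (intro card_mono) auto
  then have muk: "mu \<le> k" using muc deg xyV unfolding degree_def by auto

  define X where "X = sorted_list_of_set V"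
  define A where "A = adj_matrix V E"
  have lenX: "length X = v" using fin cardV X_def by simp
  have distX: "distinct X" and setX: "set X = V" using fin X_def by auto
  have Acar: "A \<in> carrier_mat v v" unfolding A_def adj_matrix_def X_def[symmetric] Let_def using lenX by simp
  have Aent: "A $$ (i,j) = (if E (X!i) (X!j) then 1 else 0)" if "i < v" "j < v" for i j
    unfolding A_def adj_matrix_def X_def[symmetric] Let_def using lenX that by simp
  have XV: "X ! i \<in> V" if "i < v" for i using that lenX setX nth_mem by metis
  have Xinj: "(X ! i = X ! j) = (i = j)" if "i < v" "j < v" for i j
    using that lenX distX nth_eq_iff_index_eq by metis
  have SF1: "\<And>x. x \<in> V \<Longrightarrow> (\<Sum>y\<in>V. if E x y then 1 else 0::real) = real k"
    and SF2: "\<And>x y. x \<in> V \<Longrightarrow> y \<in> V \<Longrightarrow>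
         (\<Sum>z\<in>V. (if E x z then 1 else 0::real) * (if E z y then 1 else 0))
          = (if x = y then real k else if E x y then real lam else real mu)"
    using srg_facts[OF srg] by auto
  have RI: "(\<Sum>j<v. F (X ! j)) = (\<Sum>y\<in>V. F y)" for F :: "'a \<Rightarrow> real"
    using reindex_sorted[OF fin, of F] cardV X_def by simp
  have symA: "A $$ (i,j) = A $$ (j,i)" if "i < v" "j < v" for i j
    using Aent that sym by auto
  have rowsA: "(\<Sum>j<v. A $$ (i,j)) = real k" if i: "i < v" for i
  proof -
    have "(\<Sum>j<v. A $$ (i,j)) = (\<Sum>j<v. (\<lambda>y. if E (X!i) y then 1 else 0::real) (X ! j))"
      using Aent i by (intro sum.cong) auto
    also have "\<dots> = real k" using RI[of "\<lambda>y. if E (X!i) y then 1 else 0::real"] SF1 XV[OF i] by simp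
    finally show ?thesis .
  qed
  have sqA: "(\<Sum>l<v. A $$ (i,l) * A $$ (l,j)) = real mu - (real mu - real lam) * A $$ (i,j) - (real mu - real k) * (if i = j then 1 else 0)"
    if i: "i < v" and j: "j < v" for i j
  proof -
    have "(\<Sum>l<v. A $$ (i,l) * A $$ (l,j)) = (\<Sum>l<v. (\<lambda>z. (if E (X!i) z then 1 else 0::real) * (if E z (X!j) then 1 else 0)) (X ! l))"
      using Aent i j by (intro sum.cong) auto
    also have "\<dots> = (if X!i = X!j then real k else if E (X!i) (X!j) then real lam else real mu)"
      using RI[of "\<lambda>z. (if E (X!i) z then 1 else 0::real) * (if E z (X!j) then 1 else 0)"] SF2 XV[OF i] XV[OF j] by simp
    also have "\<dots> = real mu - (real mu - real lam) * A $$ (i,j) - (real mu - real k) * (if i = j then 1 else 0)"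
      using Xinj[OF i j] Aent[OF i j] irr by auto
    finally show ?thesis .
  qed
  have specA: "proots (char_poly A) = {#real k#} + replicate_mset f r + replicate_mset g s"
    using spec unfolding spectrum_graph_def A_def .
  have "s \<in># proots (char_poly A)" using cg specA by (cases g) auto
  then obtain u where ueig: "\<And>i. i<v \<Longrightarrow> (\<Sum>j<v. A$$(i,j) * u j) = s * u i" and "\<exists>i<v. u i \<noteq> 0"
    using eig_obtain[OF Acar] by metis
  then obtain i0 where i0: "i0 < v" "u i0 \<noteq> 0" by auto
  have "s \<noteq> real k" using order by simp
  have quad: "s^2 + (real mu - real lam) * s + (real mu - real k) = 0"
    by (rule quad_eig[of v "\<lambda>i j. A $$ (i,j)", OF symA rowsA sqA ueig \<open>s \<noteq> real k\<close> i0]) auto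
  define \<rho> where "\<rho> = real lam - real mu + t"
  have prod: "real mu - real k + t * \<rho> = 0" using quad st unfolding \<rho>_def by (simp add: algebra_simps power2_eq_square)
  have key: "real lam = real mu \<and> t^2 = real k - real mu"
  proof (cases "\<rho> \<in># proots (char_poly A)")
    case True
    then have "\<rho> = real k \<or> \<rho> = r \<or> \<rho> = s" unfolding specA by (auto split: if_splits)
    then show ?thesis
    proof (elim disjE)
      assume "\<rho> = real k"
      then have "real mu = real k * (1 - t)" using prod by (simp add: algebra_simps)
      moreover have "real k * (1 - t) \<le> 0" using t1 by (intro mult_nonneg_nonpos) auto
      ultimately show ?thesis using muK K1 by simp
    next
      assume "\<rho> = r"
      then show ?thesis using prod rt unfolding \<rho>_def by (simp add: algebra_simps power2_eq_square)
    next
      assume "\<rho> = s"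
      then have "real mu = real k + t * t" using prod st by (simp add: algebra_simps)
      moreover have "t * t > 0" using tpos by simp
      ultimately show ?thesis using muk by simp
    qed
  next
    case False
    obtain p0 where p0: "p0 < v" "X ! p0 = x1" using xyV(1) setX lenX by (metis in_set_conv_nth)
    obtain q0 where q0: "q0 < v" "X ! q0 = y1" using xyV(2) setX lenX by (metis in_set_conv_nth)
    have pq: "p0 \<noteq> q0" using p0 q0 y1 by auto
    define w where "w j = A $$ (j,p0) - A $$ (j,q0) - s * ((if j = p0 then 1 else 0) - (if j = q0 then 1 else 0))" for j
    have sr1: "s + \<rho> = real lam - real mu" using st unfolding \<rho>_def by simp
    have sr2: "s * \<rho> = real mu - real k" using prod st by (simp add: algebra_simps)
    have weq: "(\<Sum>j<v. A $$ (i,j) * w j) = \<rho> * w i" if i: "i < v" for i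
      unfolding w_def by (rule w_eig[of v "\<lambda>i j. A $$ (i,j)", OF sqA sr1 sr2 p0(1) q0(1) i])
    have "w p0 = 0" by (rule not_eig[OF Acar False weq p0(1)])
    moreover have "w p0 = t" unfolding w_def using Aent[OF p0(1) p0(1)] Aent[OF p0(1) q0(1)] p0 q0 pq irr nxy st by simp
    ultimately show ?thesis using tpos by simp
  qed

  have "t * t \<le> t * 1" using key muK Kt by (simp add: power2_eq_square)
  then have "t \<le> 1" using tpos by simp
  then have tt: "t = 1" using t1 by simp
  have muv: "real mu = real k - 1" using key tt by simp
  have lav: "lam = mu" using key by simp
  have "real k > 1" using order rt tt by simp
  then have mu1: "mu \<ge> 1" and lamk: "lam = k - 1" using muv lav by linarith+
  then have "{z\<in>V. E x1 z \<and> E y1 z} \<noteq> {}" using muc by (metis card.empty not_one_le_zero)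
  then obtain w where w: "w \<in> V" "E x1 w" "E y1 w" by auto
  have wx: "E w x1" using w sym by auto
  have lc: "card {z\<in>V. E w z \<and> E x1 z} = k - 1" using laf w(1) xyV wx lamk unfolding common_nbrs_def by auto
  have sub2: "{z\<in>V. E w z \<and> E x1 z} \<subseteq> {z\<in>V. E w z} - {x1}" using irr by auto
  have "card ({z\<in>V. E w z} - {x1}) = k - 1" using deg w(1) wx xyV fin unfolding degree_def by (simp add: card_Diff_singleton)
  then have eq2: "{z\<in>V. E w z \<and> E x1 z} = {z\<in>V. E w z} - {x1}"
    using card_subset_eq[OF _ sub2] lc fin by simp
  have "y1 \<in> {z\<in>V. E w z} - {x1}" using w sym xyV y1 by auto
  then have "E x1 y1" using eq2 by auto
  with nxy show False by simp
qed

end
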